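(* Let $n\ge 1$ and let $\vec a=(a_0,\dots,a_n)$ be a vector of nonnegative integers. For a vector $\vec r=(r_1,\dots,r_n)$ of nonnegative integers, set $r_0=r_{n+1}=0$ and define \[ d(\vec a,\vec r)=\sum_{i=1}^{n} r_i\,(a_i+a_{i-1}-r_{i-1}-r_i). \] Call $\vec r$ allowable if $r_i+r_{i+1}\le a_i$ for every $i=0,1,\dots,n$. Let $1\le i\le n$ and suppose that $\vec r=(r_1,\dots,r_n)$ is such that $\vec r\,'=(r_1,\dots,r_{i-1},r_i+1,r_{i+1},\dots,r_n)$ is allowable. Then \[ d(\vec a,\vec r\,')> d(\vec a,\vec r). \]
   Context: The quantity $d(\vec a,\vec r)$ is the dimension of the variety of real chain complexes $0\leftarrow A_0\xleftarrow{d_1}A_1\leftarrow\cdots\xleftarrow{d_n}A_n\leftarrow 0$ with $\dim A_i=a_i$ and $\operatorname{rank} d_i=r_i$; allowable vectors $\vec r$ are exactly the rank vectors for which such a complex exists. *)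

theory Defs
  imports Main
begin

text \<open>Vectors a = (a_0,...,a_n) are functions nat => nat, only values at 0..n matter.
  Vectors r = (r_1,...,r_n) are functions nat => nat, only values at 1..n matter;
  the convention r_0 = r_{n+1} = 0 is implemented by ext_r.\<close>

definition ext_r :: "nat \<Rightarrow> (nat \<Rightarrow> nat) \<Rightarrow> nat \<Rightarrow> nat" where
  "ext_r n r i = (if 1 \<le> i \<and> i \<le> n then r i else 0)"

definition dim_d :: "nat \<Rightarrow> (nat \<Rightarrow> nat) \<Rightarrow> (nat \<Rightarrow> nat) \<Rightarrow> int" where
  "dim_d n a r = (\<Sum>i=1..n. int (ext_r n r i) *
      (int (a i) + int (a (i - 1)) - int (ext_r n r (i - 1)) - int (ext_r n r i)))"

definition allowable :: "nat \<Rightarrow> (nat \<Rightarrow> nat) \<Rightarrow> (nat \<Rightarrow> nat) \<Rightarrow> bool" where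
  "allowable n a r = (\<forall>i\<in>{0..n}. ext_r n r i + ext_r n r (i + 1) \<le> a i)"

end

theory Submission
  imports Defs
begin

theorem lemma2p3:
  fixes n :: nat and a r :: "nat \<Rightarrow> nat" and i :: nat
  assumes "n \<ge> 1" and "1 \<le> i" and "i \<le> n"
    and "allowable n a (r(i := r i + 1))"
  shows "dim_d n a (r(i := r i + 1)) > dim_d n a r"
proof -
  let ?r' = "r(i := r i + 1)"
  define R where "R = ext_r n r"
  define R' where "R' = ext_r n ?r'"
  have R'j: "R' j = (if j = i then R j + 1 else R j)" for j
    using assms unfolding R_def R'_def ext_r_def by auto
  have Ri: "R i = r i" using assms unfolding R_def ext_r_def by auto
  have al1: "R' (i - 1) + R' i \<le> a (i - 1)"
  proof -
    have "i - 1 \<in> {0..n}" using assms(3) by auto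
    then have "ext_r n ?r' (i - 1) + ext_r n ?r' (i - 1 + 1) \<le> a (i - 1)"
      using assms(4) unfolding allowable_def by blast
    moreover have "i - 1 + 1 = i" using assms(2) by simp
    ultimately show ?thesis unfolding R'_def by simp
  qed
  have al2: "R' i + R' (i + 1) \<le> a i"
  proof -
    have "i \<in> {0..n}" using assms(3) by auto
    then show ?thesis using assms(4) unfolding allowable_def R'_def by blast
  qed
  define f where "f j = int (R j) * (int (a j) + int (a (j - 1)) - int (R (j - 1)) - int (R j))" for j
  define f' where "f' j = int (R' j) * (int (a j) + int (a (j - 1)) - int (R' (j - 1)) - int (R' j))" for j
  define A where "A = int (a i) + int (a (i - 1)) - int (R (i - 1)) - 2 * int (R i) - 1"
  define B where "B = - int (R (Suc i))"
  have g: "f' j - f j = (if j = i then A else 0) + (if j = Suc i then B else 0)" if "j \<ge> 1" for j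
  proof -
    consider "j = i" | "j = Suc i" | "j \<noteq> i" "j \<noteq> Suc i" by blast
    then show ?thesis
    proof cases
      case 1
      then show ?thesis using assms(2) unfolding f_def f'_def A_def
        by (simp add: R'j algebra_simps)
    next
      case 2
      then show ?thesis unfolding f_def f'_def B_def
        by (simp add: R'j algebra_simps)
    next
      case 3
      then have "j - 1 \<noteq> i" using that by auto
      then show ?thesis using 3 unfolding f_def f'_def by (simp add: R'j)
    qed
  qed
  have "dim_d n a ?r' - dim_d n a r = (\<Sum>j=1..n. f' j - f j)"
    unfolding dim_d_def f_def f'_def R_def R'_def by (simp add: sum_subtractf)
  also have "\<dots> = (\<Sum>j=1..n. (if j = i then A else 0) + (if j = Suc i then B else 0))"
    by (rule sum.cong) (auto simp: g)
  also have "\<dots> = A + (if Suc i \<le> n then B else 0)"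
    using assms by (simp add: sum.distrib)
  also have "\<dots> = A + B"
    unfolding B_def R_def ext_r_def by auto
  finally have eq: "dim_d n a ?r' - dim_d n a r = A + B" .
  have ne: "i - 1 \<noteq> i" using assms(2) by simp
  have "A + B \<ge> 1"
    using al1 al2 ne unfolding A_def B_def R'j by (simp split: if_splits)
  then show ?thesis using eq by simp
qed

end
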